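(* Let $d\in\{2,3\}$, $K(x)=\gamma_0\frac{x}{|x|^d}$ with $\gamma_0\in\{1,-1\}$, and $\alpha\in[1,\infty)$. Set $\beta=1+\frac1\alpha$ and define \[ \psi_\alpha(\tau)=\begin{cases}\tau|\ln\tau|^\beta,&\tau\in[0,1/9],\\ \frac19(\ln 9)^\beta,&\tau\ge1/9.\end{cases} \] Then there exists $C=C(\alpha)>0$ such that for all $g\in L_{\phi_\alpha}(\mathbb{R}^d)\cap L^1(\mathbb{R}^d)$ and all $x,y\in\mathbb{R}^d$, \[ \int_{\mathbb{R}^d}|K(x-z)-K(y-z)||g(z)|\,dz\le C\big(\|g\|_{L_{\phi_\alpha}}+\|g\|_{L^1}\big)\psi_\alpha(|x-y|). \]
   Context: $\phi_\alpha(\tau)=\exp(\tau^\alpha)-1$, and $L_{\phi_\alpha}(\mathbb{R}^d)$ is the Orlicz space with Luxemburg norm $\|f\|_{L_{\phi_\alpha}}=\inf\{\lambda>0:\int_{\mathbb{R}^d}\phi_\alpha(|f(x)|/\lambda)\,dx<1\}$. *)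

theory Defs
  imports "HOL-Analysis.Analysis"
begin

definition phi_alpha :: "real \<Rightarrow> real \<Rightarrow> real" where
  "phi_alpha \<alpha> \<tau> = exp (\<tau> powr \<alpha>) - 1"

definition orlicz_space :: "(real \<Rightarrow> real) \<Rightarrow> ('a::euclidean_space \<Rightarrow> real) set" where
  "orlicz_space \<Phi> = {f. f \<in> borel_measurable lebesgue \<and>
     (\<exists>c>0. (\<integral>\<^sup>+ x. ennreal (\<Phi> (\<bar>f x\<bar> / c)) \<partial>lebesgue) < \<infinity>)}"

definition lux_norm :: "(real \<Rightarrow> real) \<Rightarrow> ('a::euclidean_space \<Rightarrow> real) \<Rightarrow> real" where
  "lux_norm \<Phi> f = Inf {c. c > 0 \<and> (\<integral>\<^sup>+ x. ennreal (\<Phi> (\<bar>f x\<bar> / c)) \<partial>lebesgue) < 1}"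

definition kernK :: "real \<Rightarrow> 'a::euclidean_space \<Rightarrow> 'a" where
  "kernK \<gamma>0 x = (\<gamma>0 / norm x ^ DIM('a)) *\<^sub>R x"

definition psi_alpha :: "real \<Rightarrow> real \<Rightarrow> real" where
  "psi_alpha \<alpha> \<tau> = (if \<tau> \<le> 1/9 then \<tau> * \<bar>ln \<tau>\<bar> powr (1 + 1/\<alpha>)
                      else (1/9) * (ln 9) powr (1 + 1/\<alpha>))"

end

theory Submission
  imports Defs
begin


lemma powr_le_one_plus:
  fixes t p :: real assumes "0 \<le> t" "0 < p" "p \<le> 1"
  shows "t powr p \<le> 1 + t"
proof (cases "t \<le> 1")
  case True
  then have "t powr p \<le> 1" using assms by (simp add: powr_le1)
  then show ?thesis using assms by linarith
next
  case False
  then have "t powr p \<le> t powr 1" using assms by (intro powr_mono) auto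
  then show ?thesis using False by simp
qed

lemma young_phi:
  fixes a b \<alpha> :: real
  assumes a: "0 \<le> a" and b: "0 \<le> b" and al: "1 \<le> \<alpha>"
  shows "a * b \<le> phi_alpha \<alpha> a + b * (8 + 2 * ln (1 + b) powr (1/\<alpha>))"
proof -
  have phinn: "0 \<le> phi_alpha \<alpha> a" unfolding phi_alpha_def using a by simp
  have L0: "0 \<le> ln (1 + b)" using b by simp
  show ?thesis
  proof (cases "a \<le> 8")
    case True
    have "a * b \<le> 8 * b" using True b by (simp add: mult_right_mono)
    moreover have "0 \<le> b * (2 * ln (1 + b) powr (1/\<alpha>))" using b by simp
    ultimately show ?thesis using phinn by (simp add: algebra_simps)
  next
    case False
    then have a8: "a > 8" by simp
    show ?thesis
    proof (cases "a * b \<le> phi_alpha \<alpha> a")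
      case True
      then show ?thesis using b by (smt (verit) mult_nonneg_nonneg powr_ge_zero)
    next
      case False
      then have "exp (a powr \<alpha>) < 1 + a * b" unfolding phi_alpha_def by simp
      also have "\<dots> \<le> (1 + a) * (1 + b)" using a b by (simp add: algebra_simps)
      finally have "a powr \<alpha> < ln ((1 + a) * (1 + b))"
        using a b by (metis exp_less_cancel_iff exp_ln add_nonneg_nonneg mult_pos_pos
            zero_less_one add_pos_nonneg)
      also have "\<dots> = ln (1 + a) + ln (1 + b)" using a b by (simp add: ln_mult)
      finally have ineq: "a powr \<alpha> < ln (1 + a) + ln (1 + b)" .
      have "exp (a/4) \<ge> 1 + a/4" by (rule exp_ge_add_one_self)
      then have "exp (a/4)^2 \<ge> (1 + a/4)^2" using a by (intro power_mono) auto
      then have "exp (a/2) \<ge> (1 + a/4)^2" by (simp add: exp_double[symmetric] power2_eq_square exp_add[symmetric])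
      moreover have "(1 + a/4)^2 \<ge> 1 + a"
      proof -
        have "8 * a \<le> a * a" using a8 by (intro mult_right_mono) auto
        then show ?thesis by (simp add: power2_eq_square algebra_simps)
      qed
      ultimately have "1 + a \<le> exp (a/2)" by linarith
      then have la: "ln (1 + a) \<le> a/2" using a by (metis add_pos_nonneg ln_exp ln_le_cancel_iff zero_less_one exp_gt_zero)
      have "a powr 1 \<le> a powr \<alpha>" using a8 al by (intro powr_mono) auto
      then have "a \<le> a powr \<alpha>" using a8 by simp
      with ineq la have "a powr \<alpha> < 2 * ln (1 + b)" by linarith
      then have "(a powr \<alpha>) powr (1/\<alpha>) \<le> (2 * ln (1 + b)) powr (1/\<alpha>)"
        using al a by (intro powr_mono2) auto
      then have "a \<le> 2 powr (1/\<alpha>) * ln (1 + b) powr (1/\<alpha>)"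
        using al a L0 by (simp add: powr_powr powr_mult)
      also have "2 powr (1/\<alpha>) \<le> 2 powr 1" using al by (intro powr_mono) auto
      then have "2 powr (1/\<alpha>) * ln (1 + b) powr (1/\<alpha>) \<le> 2 * ln (1 + b) powr (1/\<alpha>)"
        by (intro mult_right_mono) auto
      finally have "a \<le> 2 * ln (1 + b) powr (1/\<alpha>)" .
      then have "a * b \<le> b * (2 * ln (1 + b) powr (1/\<alpha>))" using b by (metis mult.commute mult_left_mono)
      then show ?thesis using phinn b by (simp add: algebra_simps)
    qed
  qed
qed


lemma phi_meas[measurable]:
  fixes g :: "'a::euclidean_space \<Rightarrow> real"
  assumes [measurable]: "g \<in> borel_measurable lebesgue"
  shows "(\<lambda>z. ennreal (phi_alpha \<alpha> (\<bar>g z\<bar> / l))) \<in> borel_measurable lebesgue"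
  unfolding phi_alpha_def by measurable

lemma ball_bound:
  fixes g :: "'a::euclidean_space \<Rightarrow> real"
  assumes gm[measurable]: "g \<in> borel_measurable lebesgue"
    and lam: "l > 0" and al: "\<alpha> \<ge> 1"
    and hI: "(\<integral>\<^sup>+z. ennreal (phi_alpha \<alpha> (\<bar>g z\<bar> / l)) \<partial>lebesgue) \<le> 1"
    and B[measurable]: "B \<in> sets lebesgue" and Bm: "emeasure lebesgue B = ennreal m" and m: "m > 0"
  shows "(\<integral>\<^sup>+z. indicator B z * ennreal \<bar>g z\<bar> \<partial>lebesgue)
          \<le> ennreal (l * m * (9 + 2 * ln (1 + 1/m) powr (1/\<alpha>)))"
proof -
  define G where "G = 8 + 2 * ln (1 + 1/m) powr (1/\<alpha>)"
  have G0: "G \<ge> 0" unfolding G_def by simp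
  have pw: "indicator B z * ennreal \<bar>g z\<bar> \<le>
      ennreal (l * m) * ennreal (phi_alpha \<alpha> (\<bar>g z\<bar> / l)) + ennreal (l * G) * indicator B z" for z
  proof (cases "z \<in> B")
    case True
    have y: "(\<bar>g z\<bar> / l) * (1/m) \<le> phi_alpha \<alpha> (\<bar>g z\<bar> / l) + (1/m) * G"
      unfolding G_def using young_phi[of "\<bar>g z\<bar> / l" "1/m" \<alpha>] lam m al by auto
    have "\<bar>g z\<bar> = (l * m) * ((\<bar>g z\<bar> / l) * (1/m))" using lam m by simp
    also have "\<dots> \<le> (l * m) * (phi_alpha \<alpha> (\<bar>g z\<bar> / l) + (1/m) * G)"
      using y lam m by (intro mult_left_mono) auto
    also have "\<dots> = (l * m) * phi_alpha \<alpha> (\<bar>g z\<bar> / l) + l * G" using m by (simp add: algebra_simps)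
    finally have "\<bar>g z\<bar> \<le> (l * m) * phi_alpha \<alpha> (\<bar>g z\<bar> / l) + l * G" .
    moreover have "0 \<le> phi_alpha \<alpha> (\<bar>g z\<bar> / l)" unfolding phi_alpha_def by simp
    ultimately show ?thesis using True lam m G0
      by (simp add: ennreal_mult'[symmetric] ennreal_plus[symmetric] del: ennreal_plus)
  qed simp
  have "(\<integral>\<^sup>+z. indicator B z * ennreal \<bar>g z\<bar> \<partial>lebesgue) \<le>
      (\<integral>\<^sup>+z. ennreal (l * m) * ennreal (phi_alpha \<alpha> (\<bar>g z\<bar> / l)) + ennreal (l * G) * indicator B z \<partial>lebesgue)"
    by (intro nn_integral_mono pw)
  also have "\<dots> = ennreal (l * m) * (\<integral>\<^sup>+z. ennreal (phi_alpha \<alpha> (\<bar>g z\<bar> / l)) \<partial>lebesgue)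
       + ennreal (l * G) * emeasure lebesgue B"
    by (subst nn_integral_add) (auto simp: nn_integral_cmult)
  also have "\<dots> \<le> ennreal (l * m) * 1 + ennreal (l * G) * ennreal m"
    using hI Bm by (intro add_mono mult_left_mono) auto
  also have "\<dots> = ennreal (l * m * (1 + G))" using lam m G0
    by (simp add: ennreal_mult'[symmetric] ennreal_plus[symmetric] algebra_simps del: ennreal_plus)
  also have "1 + G = 9 + 2 * ln (1 + 1/m) powr (1/\<alpha>)" unfolding G_def by simp
  finally show ?thesis .
qed


lemma ennreal_term_le_suminf: "(f::nat \<Rightarrow> ennreal) j \<le> suminf f"
  using sum_le_suminf[of f "{j}"] by (simp add: summableI)

lemma dyadic_exists:
  fixes R d :: real assumes "0 < d" "d < R"
  shows "\<exists>j::nat. R / 2 ^ Suc j \<le> d \<and> d < R / 2 ^ j"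
proof -
  obtain n :: nat where n: "R / d < 2 ^ n" using real_arch_pow[of 2 "R/d"] by auto
  have Pn: "R / 2 ^ n < d" using n assms by (simp add: field_simps)
  have "n \<noteq> 0"
  proof
    assume "n = 0" with Pn have "R < d" by simp
    with assms show False by simp
  qed
  then obtain k where "n = Suc k" by (cases n) auto
  with Pn have ex: "\<exists>j. R / 2 ^ Suc j \<le> d" by (intro exI[of _ k]) auto
  define j where "j = (LEAST j. R / 2 ^ Suc j \<le> d)"
  have j1: "R / 2 ^ Suc j \<le> d" unfolding j_def using LeastI_ex[OF ex] .
  have "d < R / 2 ^ j"
  proof (cases j)
    case 0 then show ?thesis using assms by simp
  next
    case (Suc k)
    then have "k < j" by simp
    then have "\<not> R / 2 ^ Suc k \<le> d" unfolding j_def by (rule not_less_Least)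
    then show ?thesis using Suc by simp
  qed
  with j1 show ?thesis by blast
qed

lemma ball_leb[measurable]: "ball (c::'a::euclidean_space) r \<in> sets lebesgue"
  by simp

lemma dyadic:
  fixes f :: "'a::euclidean_space \<Rightarrow> ennreal" and w :: "real \<Rightarrow> real"
  assumes f[measurable]: "f \<in> borel_measurable lebesgue"
    and R: "R > 0"
    and mono: "\<And>r r'. 0 < r \<Longrightarrow> r \<le> r' \<Longrightarrow> w r' \<le> w r"
  shows "(\<integral>\<^sup>+z. indicator (ball c R) z * ennreal (w (dist c z)) * f z \<partial>lebesgue)
     \<le> (\<Sum>j. ennreal (w (R / 2 ^ Suc j)) * (\<integral>\<^sup>+z. indicator (ball c (R / 2 ^ j)) z * f z \<partial>lebesgue))"
proof -
  have ae: "AE z in lebesgue. z \<noteq> c" by (rule AE_completion[OF AE_lborel_singleton])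
  have "(\<integral>\<^sup>+z. indicator (ball c R) z * ennreal (w (dist c z)) * f z \<partial>lebesgue)
     \<le> (\<integral>\<^sup>+z. (\<Sum>j. ennreal (w (R / 2 ^ Suc j)) * (indicator (ball c (R / 2 ^ j)) z * f z)) \<partial>lebesgue)"
  proof (rule nn_integral_mono_AE)
    show "AE z in lebesgue. indicator (ball c R) z * ennreal (w (dist c z)) * f z
       \<le> (\<Sum>j. ennreal (w (R / 2 ^ Suc j)) * (indicator (ball c (R / 2 ^ j)) z * f z))"
      using ae
    proof eventually_elim
      case (elim z)
      show ?case
      proof (cases "z \<in> ball c R")
        case True
        then have "0 < dist c z" "dist c z < R" using elim by auto
        then obtain j where j: "R / 2 ^ Suc j \<le> dist c z" "dist c z < R / 2 ^ j"
          using dyadic_exists by blast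
        have "w (dist c z) \<le> w (R / 2 ^ Suc j)" using j R by (intro mono) auto
        then have "indicator (ball c R) z * ennreal (w (dist c z)) * f z
            \<le> ennreal (w (R / 2 ^ Suc j)) * (indicator (ball c (R / 2 ^ j)) z * f z)"
          using True j by (auto intro!: mult_right_mono ennreal_leI)
        also have "\<dots> \<le> (\<Sum>j. ennreal (w (R / 2 ^ Suc j)) * (indicator (ball c (R / 2 ^ j)) z * f z))"
          by (rule ennreal_term_le_suminf)
        finally show ?thesis .
      qed simp
    qed
  qed
  also have "\<dots> = (\<Sum>j. (\<integral>\<^sup>+z. ennreal (w (R / 2 ^ Suc j)) * (indicator (ball c (R / 2 ^ j)) z * f z) \<partial>lebesgue))"
    by (rule nn_integral_suminf) measurable
  also have "\<dots> = (\<Sum>j. ennreal (w (R / 2 ^ Suc j)) * (\<integral>\<^sup>+z. indicator (ball c (R / 2 ^ j)) z * f z \<partial>lebesgue))"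
    by (subst nn_integral_cmult) auto
  finally show ?thesis .
qed




definition Ew :: "nat \<Rightarrow> real \<Rightarrow> real \<Rightarrow> real" where
  "Ew d s r = min (1 / r ^ (d - 1)) (s / r ^ d)"

lemma Ew_nonneg: "0 \<le> s \<Longrightarrow> 0 \<le> r \<Longrightarrow> 0 \<le> Ew d s r"
  unfolding Ew_def by simp

lemma Ew_far: assumes "0 < s" "s \<le> r" "1 \<le> d" shows "Ew d s r = s / r ^ d"
proof -
  have r: "r > 0" using assms by simp
  have "r ^ d = r * r ^ (d - 1)" using assms(3) by (metis Suc_diff_1 less_le_trans power_Suc zero_less_one)
  then have "s / r ^ d \<le> 1 / r ^ (d - 1)" using assms r by (simp add: divide_simps mult_right_mono)
  then show ?thesis unfolding Ew_def by simp
qed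

lemma Ew_small: assumes "0 \<le> r" "r < 2 * s" "2 \<le> d" shows "1 / r ^ (d - 1) \<le> 2 * Ew d s r"
proof (cases "r = 0")
  case True
  have "0 < d - 1" "0 < d" using assms by auto
  then show ?thesis using True by (simp add: Ew_def zero_power)
next
  case False
  then have r: "r > 0" using assms by simp
  have rd: "r ^ d = r * r ^ (d - 1)" using assms(3) by (metis Suc_diff_1 le_trans one_le_numeral  less_eq_Suc_le power_Suc zero_less_one)
  have "1 / r ^ (d - 1) \<le> 2 * (s / r ^ d)" using assms r rd by (simp add: divide_simps)
  moreover have "1 / r ^ (d - 1) \<le> 2 * (1 / r ^ (d - 1))" using r by (simp add: divide_simps)
  ultimately show ?thesis unfolding Ew_def by (simp add: min_def)
qed

lemma Ew_large: assumes "0 \<le> r" "2 \<le> d" shows "1 / r ^ (d - 1) \<le> 9 * Ew d (1/9) r + 1"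
proof (cases "r \<le> 1")
  case True
  show ?thesis
  proof (cases "r = 0")
    case True
    have "0 < d - 1" "0 < d" using assms by auto
    then show ?thesis using True by (simp add: Ew_def zero_power)
  next
    case False
    then have r: "r > 0" using assms by simp
    have rd: "r ^ d = r * r ^ (d - 1)" using assms(2) by (metis Suc_diff_1 le_trans one_le_numeral  less_eq_Suc_le power_Suc zero_less_one)
    have p: "r ^ (d - 1) > 0" using r by simp
    have "1 / r ^ (d - 1) \<le> 9 * ((1/9) / r ^ d)" using True r rd p by (simp add: divide_simps)
    moreover have "1 / r ^ (d - 1) \<le> 9 * (1 / r ^ (d - 1))" using r by (simp add: divide_simps)
    ultimately have "1 / r ^ (d - 1) \<le> 9 * Ew d (1/9) r" unfolding Ew_def by (simp add: min_def)
    then show ?thesis by simp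
  qed
next
  case False
  then have "1 \<le> r ^ (d - 1)" by (simp add: one_le_power)
  then have "1 / r ^ (d - 1) \<le> 1" by simp
  moreover have "0 \<le> Ew d (1/9) r" using assms by (simp add: Ew_nonneg)
  ultimately show ?thesis by linarith
qed

lemma kern_norm:
  assumes "2 \<le> DIM('a::euclidean_space)"
  shows "norm (kernK \<gamma> (a::'a)) = \<bar>\<gamma>\<bar> / norm a ^ (DIM('a) - 1)"
proof (cases "a = 0")
  case True then show ?thesis using assms by (simp add: kernK_def)
next
  case False
  have rd: "norm a ^ DIM('a) = norm a * norm a ^ (DIM('a) - 1)"
    using assms by (metis Suc_diff_1 le_trans one_le_numeral  less_eq_Suc_le power_Suc zero_less_one)
  show ?thesis using False unfolding kernK_def by (simp add: rd)
qed

lemma pow_diff_bound: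
  fixes p q t :: real
  assumes "d \<in> {2,3::nat}" "0 < p" "p \<le> 2 * q" "\<bar>q - p\<bar> \<le> t"
  shows "\<bar>q ^ d - p ^ d\<bar> \<le> 7 * t * q ^ (d - 1)"
proof -
  have q: "q > 0" using assms by simp
  have t: "t \<ge> 0" using assms(4) by simp
  consider "d = 2" | "d = 3" using assms(1) by auto
  then show ?thesis
  proof cases
    case 1
    have "q ^ 2 - p ^ 2 = (q - p) * (q + p)" by (simp add: power2_eq_square algebra_simps)
    then have "\<bar>q ^ 2 - p ^ 2\<bar> = \<bar>q - p\<bar> * (q + p)" using q assms
      by (simp add: abs_mult)
    also have "\<dots> \<le> t * (3 * q)" using assms q by (intro mult_mono) auto
    also have "\<dots> \<le> 7 * t * q" using t q by simp
    finally show ?thesis using 1 by simp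
  next
    case 2
    have "q ^ 3 - p ^ 3 = (q - p) * (q*q + q*p + p*p)" by (simp add: power3_eq_cube algebra_simps)
    moreover have "q*q + q*p + p*p > 0" using q assms by (simp add: add_pos_pos)
    ultimately have "\<bar>q ^ 3 - p ^ 3\<bar> = \<bar>q - p\<bar> * (q*q + q*p + p*p)"
      by (simp add: abs_mult)
    also have "q*q + q*p + p*p \<le> q*q + q*(2*q) + (2*q)*(2*q)"
      using assms q by (intro add_mono mult_mono) auto
    then have "\<bar>q - p\<bar> * (q*q + q*p + p*p) \<le> t * (7 * (q * q))"
      using assms q by (intro mult_mono) (auto simp: algebra_simps)
    finally show ?thesis using 2 by (simp add: power2_eq_square algebra_simps)
  qed
qed


lemma kern_far:
  fixes a b :: "'a::euclidean_space"
  assumes d: "DIM('a) \<in> {2,3}" and g: "\<bar>\<gamma>\<bar> = 1" and pos: "0 < norm (a - b)"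
    and far: "2 * norm (a - b) \<le> norm a"
  shows "norm (kernK \<gamma> a - kernK \<gamma> b) \<le> 8 * norm (a - b) / norm a ^ DIM('a)"
proof -
  define p where "p = norm a"
  define q where "q = norm b"
  define t where "t = norm (a - b)"
  define n where "n = DIM('a)"
  have p: "p > 0" using pos far unfolding p_def by linarith
  have qp: "\<bar>q - p\<bar> \<le> t" unfolding p_def q_def t_def by (metis norm_triangle_ineq3 norm_minus_commute)
  have p2q: "p \<le> 2 * q" using qp far pos unfolding p_def q_def t_def by linarith
  have q: "q > 0" using p p2q by simp
  have n2: "n \<ge> 1" using d unfolding n_def by auto
  have qn: "q ^ n = q * q ^ (n - 1)" using n2 by (metis Suc_diff_1 less_le_trans power_Suc zero_less_one)
  have pdb: "\<bar>q ^ n - p ^ n\<bar> \<le> 7 * t * q ^ (n - 1)"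
    using pow_diff_bound[of n p q t] d p p2q qp unfolding n_def by auto
  have eq: "kernK \<gamma> a - kernK \<gamma> b = \<gamma> *\<^sub>R ((1 / p ^ n) *\<^sub>R (a - b) + (1 / p ^ n - 1 / q ^ n) *\<^sub>R b)"
    unfolding kernK_def p_def q_def n_def by (simp add: algebra_simps scaleR_diff_right)
  have "norm (kernK \<gamma> a - kernK \<gamma> b) = norm ((1 / p ^ n) *\<^sub>R (a - b) + (1 / p ^ n - 1 / q ^ n) *\<^sub>R b)"
    unfolding eq using g by simp
  also have "\<dots> \<le> norm ((1 / p ^ n) *\<^sub>R (a - b)) + norm ((1 / p ^ n - 1 / q ^ n) *\<^sub>R b)"
    by (rule norm_triangle_ineq)
  also have "\<dots> = t / p ^ n + \<bar>q ^ n - p ^ n\<bar> / (p ^ n * q ^ n) * q"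
    using p q unfolding t_def q_def by (simp add: abs_div divide_simps abs_minus_commute)
  also have "\<bar>q ^ n - p ^ n\<bar> / (p ^ n * q ^ n) * q \<le> 7 * t * q ^ (n - 1) / (p ^ n * q ^ n) * q"
    using pdb p q by (intro mult_right_mono divide_right_mono) auto
  also have "7 * t * q ^ (n - 1) / (p ^ n * q ^ n) * q = 7 * t / p ^ n"
    using p q qn by (simp add: field_simps)
  finally show ?thesis unfolding p_def t_def n_def by simp
qed

lemma kern_small:
  fixes a b :: "'a::euclidean_space"
  assumes d: "DIM('a) \<in> {2,3}" and g: "\<bar>\<gamma>\<bar> = 1" and pos: "0 < norm (a - b)"
  shows "norm (kernK \<gamma> a - kernK \<gamma> b) \<le>
     8 * (Ew DIM('a) (norm (a - b)) (norm a) + Ew DIM('a) (norm (a - b)) (norm b))"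
proof -
  define t where "t = norm (a - b)"
  have d2: "2 \<le> DIM('a)" using d by auto
  have e0: "0 \<le> Ew DIM('a) t (norm a)" "0 \<le> Ew DIM('a) t (norm b)"
    using pos unfolding t_def by (auto intro: Ew_nonneg)
  have tb: "t = norm (b - a)" unfolding t_def by (simp add: norm_minus_commute)
  show ?thesis
  proof (cases "2 * t \<le> norm a")
    case True
    have "norm (kernK \<gamma> a - kernK \<gamma> b) \<le> 8 * t / norm a ^ DIM('a)"
      using kern_far[OF d g pos] True unfolding t_def by simp
    also have "\<dots> = 8 * Ew DIM('a) t (norm a)" using Ew_far[of t "norm a" "DIM('a)"] True pos
      unfolding t_def by simp
    finally show ?thesis using e0 unfolding t_def by simp
  next
    case F1: False
    show ?thesis
    proof (cases "2 * t \<le> norm b")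
      case True
      have "norm (kernK \<gamma> a - kernK \<gamma> b) = norm (kernK \<gamma> b - kernK \<gamma> a)" by (simp add: norm_minus_commute)
      also have "\<dots> \<le> 8 * t / norm b ^ DIM('a)"
        using kern_far[OF d g, of b a] True pos unfolding tb by simp
      also have "\<dots> = 8 * Ew DIM('a) t (norm b)" using Ew_far[of t "norm b" "DIM('a)"] True pos
        unfolding t_def by simp
      finally show ?thesis using e0 unfolding t_def by simp
    next
      case False
      have "norm (kernK \<gamma> a - kernK \<gamma> b) \<le> norm (kernK \<gamma> a) + norm (kernK \<gamma> b)"
        by (rule norm_triangle_ineq4)
      also have "\<dots> = 1 / norm a ^ (DIM('a) - 1) + 1 / norm b ^ (DIM('a) - 1)"
        using kern_norm[OF d2] g by simp
      also have "\<dots> \<le> 2 * Ew DIM('a) t (norm a) + 2 * Ew DIM('a) t (norm b)"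
        using Ew_small[OF _ _ d2] F1 False by (intro add_mono) auto
      finally show ?thesis using e0 unfolding t_def by simp
    qed
  qed
qed

lemma kern_large:
  fixes a b :: "'a::euclidean_space"
  assumes d: "DIM('a) \<in> {2,3}" and g: "\<bar>\<gamma>\<bar> = 1"
  shows "norm (kernK \<gamma> a - kernK \<gamma> b) \<le>
     9 * Ew DIM('a) (1/9) (norm a) + 1 + (9 * Ew DIM('a) (1/9) (norm b) + 1)"
proof -
  have d2: "2 \<le> DIM('a)" using d by auto
  have "norm (kernK \<gamma> a - kernK \<gamma> b) \<le> norm (kernK \<gamma> a) + norm (kernK \<gamma> b)"
    by (rule norm_triangle_ineq4)
  also have "\<dots> = 1 / norm a ^ (DIM('a) - 1) + 1 / norm b ^ (DIM('a) - 1)"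
    using kern_norm[OF d2] g by simp
  also have "\<dots> \<le> 9 * Ew DIM('a) (1/9) (norm a) + 1 + (9 * Ew DIM('a) (1/9) (norm b) + 1)"
    using Ew_large[OF _ d2] by (intro add_mono) auto
  finally show ?thesis .
qed




lemma Ew_m_bounds:
  fixes \<omega> s :: real and j d :: nat
  assumes "\<omega> > 0" "s > 0" "d \<ge> 1"
  shows "Ew d s (1 / 2 ^ Suc j) * (\<omega> * (1 / 2 ^ j) ^ d) \<le> \<omega> * 2 ^ d * s"
    and "Ew d s (1 / 2 ^ Suc j) * (\<omega> * (1 / 2 ^ j) ^ d) \<le> \<omega> * 2 ^ d * (1 / 2) ^ j"
proof -
  define \<rho> :: real where "\<rho> = 1 / 2 ^ j"
  have \<rho>: "\<rho> > 0" unfolding \<rho>_def by simp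
  have r: "1 / 2 ^ Suc j = \<rho> / 2" unfolding \<rho>_def by simp
  have rd: "\<rho> ^ d = \<rho> * \<rho> ^ (d - 1)" using assms(3) by (metis Suc_diff_1 less_le_trans power_Suc zero_less_one)
  have pd: "(2::real) ^ d = 2 * 2 ^ (d - 1)" using assms(3) by (metis Suc_diff_1 less_le_trans power_Suc zero_less_one)
  have "Ew d s (\<rho> / 2) \<le> s / (\<rho> / 2) ^ d" unfolding Ew_def by simp
  then have "Ew d s (\<rho> / 2) * (\<omega> * \<rho> ^ d) \<le> s / (\<rho> / 2) ^ d * (\<omega> * \<rho> ^ d)"
    using assms \<rho> by (intro mult_right_mono) auto
  also have "\<dots> = \<omega> * 2 ^ d * s" using \<rho> by (simp add: power_divide field_simps)
  finally show "Ew d s (1 / 2 ^ Suc j) * (\<omega> * (1 / 2 ^ j) ^ d) \<le> \<omega> * 2 ^ d * s"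
    unfolding r \<rho>_def[symmetric] .
  have "Ew d s (\<rho> / 2) \<le> 1 / (\<rho> / 2) ^ (d - 1)" unfolding Ew_def by simp
  then have "Ew d s (\<rho> / 2) * (\<omega> * \<rho> ^ d) \<le> 1 / (\<rho> / 2) ^ (d - 1) * (\<omega> * \<rho> ^ d)"
    using assms \<rho> by (intro mult_right_mono) auto
  also have "\<dots> = \<omega> * 2 ^ (d - 1) * \<rho>" using \<rho> rd by (simp add: power_divide field_simps)
  also have "\<dots> \<le> \<omega> * 2 ^ d * \<rho>" using assms \<rho> pd by simp
  finally show "Ew d s (1 / 2 ^ Suc j) * (\<omega> * (1 / 2 ^ j) ^ d) \<le> \<omega> * 2 ^ d * (1 / 2) ^ j"
    unfolding r \<rho>_def[symmetric] by (simp add: \<rho>_def power_one_over)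
qed

lemma log_term:
  fixes \<omega> :: real and j d :: nat
  assumes "\<omega> > 0"
  shows "ln (1 + 1 / (\<omega> * (1 / 2 ^ j) ^ d)) \<le> ln (1 + 1/\<omega>) + real j * (real d * ln 2)"
proof -
  have p1: "(2::real) ^ (j * d) \<ge> 1" by simp
  have "1 + 1 / (\<omega> * (1 / 2 ^ j) ^ d) = 1 + 2 ^ (j * d) / \<omega>"
    by (simp add: power_one_over power_mult[symmetric] mult.commute)
  also have "\<dots> \<le> (1 + 1/\<omega>) * 2 ^ (j * d)" using p1 assms by (simp add: field_simps)
  finally have "ln (1 + 1 / (\<omega> * (1 / 2 ^ j) ^ d)) \<le> ln ((1 + 1/\<omega>) * 2 ^ (j * d))"
    using assms by (intro ln_mono) (auto intro: add_pos_nonneg)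
  also have "\<dots> = ln (1 + 1/\<omega>) + real j * (real d * ln 2)"
  proof -
    have "1 + 1/\<omega> > 0" using assms by (simp add: add_pos_nonneg)
    then show ?thesis by (simp add: ln_mult ln_realpow)
  qed
  finally show ?thesis .
qed

lemma F_bound_crude:
  fixes \<omega> \<alpha> :: real and j d :: nat
  assumes "\<omega> > 0" "\<alpha> \<ge> 1"
  defines "K2 \<equiv> 11 + 2 * ln (1 + 1/\<omega>) + 2 * real d * ln 2"
  shows "9 + 2 * ln (1 + 1 / (\<omega> * (1 / 2 ^ j) ^ d)) powr (1/\<alpha>) \<le> K2 * (real j + 1)"
proof -
  define A where "A = ln (1 + 1/\<omega>)"
  have A: "A \<ge> 0" unfolding A_def using assms by simp
  have L0: "0 \<le> ln (1 + 1 / (\<omega> * (1 / 2 ^ j) ^ d))" using assms by simp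
  have "ln (1 + 1 / (\<omega> * (1 / 2 ^ j) ^ d)) powr (1/\<alpha>) \<le> 1 + ln (1 + 1 / (\<omega> * (1 / 2 ^ j) ^ d))"
    using assms L0 by (intro powr_le_one_plus) auto
  also have "\<dots> \<le> 1 + A + real j * (real d * ln 2)" using log_term[OF assms(1), of j d] unfolding A_def by simp
  finally have "9 + 2 * ln (1 + 1 / (\<omega> * (1 / 2 ^ j) ^ d)) powr (1/\<alpha>) \<le> 11 + 2*A + real j * (2 * real d * ln 2)"
    by simp
  also have "\<dots> \<le> (11 + 2*A + 2 * real d * ln 2) * (real j + 1)"
    using A by (simp add: algebra_simps)
  finally show ?thesis unfolding K2_def A_def .
qed

lemma F_bound_sharp:
  fixes \<omega> \<alpha> :: real and j d N :: nat
  assumes "\<omega> > 0" "\<alpha> \<ge> 1" "j < N"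
  defines "K2 \<equiv> 11 + 2 * ln (1 + 1/\<omega>) + 2 * real d * ln 2"
  shows "9 + 2 * ln (1 + 1 / (\<omega> * (1 / 2 ^ j) ^ d)) powr (1/\<alpha>) \<le> K2 * real N powr (1/\<alpha>)"
proof -
  define A where "A = ln (1 + 1/\<omega>)"
  define B where "B = A + real d * ln 2"
  have A: "A \<ge> 0" unfolding A_def using assms by simp
  have B: "B \<ge> 0" unfolding B_def using A by simp
  have N1: "real N \<ge> 1" using assms by simp
  have NP: "real N powr (1/\<alpha>) \<ge> 1" using N1 assms by (simp add: ge_one_powr_ge_zero)
  have L0: "0 \<le> ln (1 + 1 / (\<omega> * (1 / 2 ^ j) ^ d))" using assms by simp
  have "ln (1 + 1 / (\<omega> * (1 / 2 ^ j) ^ d)) \<le> A + real j * (real d * ln 2)"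
    using log_term[OF assms(1), of j d] unfolding A_def by simp
  also have "\<dots> \<le> A * real N + real N * (real d * ln 2)"
  proof -
    have "A * 1 \<le> A * real N" using A N1 by (intro mult_left_mono) auto
    moreover have "real j * (real d * ln 2) \<le> real N * (real d * ln 2)"
      using assms(3) by (intro mult_right_mono) auto
    ultimately show ?thesis by simp
  qed
  also have "\<dots> = B * real N" unfolding B_def by (simp add: algebra_simps)
  finally have "ln (1 + 1 / (\<omega> * (1 / 2 ^ j) ^ d)) powr (1/\<alpha>) \<le> (B * real N) powr (1/\<alpha>)"
    using L0 assms by (intro powr_mono2) auto
  also have "\<dots> = B powr (1/\<alpha>) * real N powr (1/\<alpha>)" using B N1 by (simp add: powr_mult)
  also have "\<dots> \<le> (1 + B) * real N powr (1/\<alpha>)"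
    using B assms by (intro mult_right_mono powr_le_one_plus) auto
  finally have "9 + 2 * ln (1 + 1 / (\<omega> * (1 / 2 ^ j) ^ d)) powr (1/\<alpha>) \<le> 9 * real N powr (1/\<alpha>) + 2 * ((1 + B) * real N powr (1/\<alpha>))"
    using NP by linarith
  also have "\<dots> = K2 * real N powr (1/\<alpha>)" unfolding K2_def B_def A_def by (simp add: algebra_simps)
  finally show ?thesis .
qed

lemma tail_geom:
  fixes j N :: nat assumes "N \<le> j" "1 \<le> N"
  shows "(1/2::real) ^ j * (real j + 1) \<le> (real N + 1) * (1/2) ^ N * (3/4) ^ (j - N)"
proof -
  define t where "t = j - N"
  have j: "j = N + t" using assms unfolding t_def by simp
  have bern: "1 + real t / 2 \<le> (3/2 :: real) ^ t" using Bernoulli_inequality[of "1/2" t] by simp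
  have "real j + 1 = (real N + 1) * (1 + real t / (real N + 1))" using j by (simp add: field_simps)
  also have "\<dots> \<le> (real N + 1) * (3/2) ^ t"
  proof -
    have "real N + 1 \<ge> 2" using assms by simp
    then have "real t / (real N + 1) \<le> real t / 2" by (intro divide_left_mono) auto
    with bern have "1 + real t / (real N + 1) \<le> (3/2) ^ t" by linarith
    then show ?thesis by (intro mult_left_mono) auto
  qed
  finally have "(1/2::real) ^ j * (real j + 1) \<le> (1/2) ^ j * ((real N + 1) * (3/2) ^ t)"
    by (intro mult_left_mono) auto
  also have "\<dots> = (real N + 1) * (1/2) ^ N * (3/4) ^ t"
    unfolding j by (simp add: power_add power_mult_distrib[symmetric])
  finally show ?thesis unfolding t_def .
qed




lemma emeasure_leb_ball: "r \<ge> 0 \<Longrightarrow> emeasure lebesgue (ball (c::'a::euclidean_space) r) = ennreal (unit_ball_vol (real DIM('a)) * r ^ DIM('a))"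
  by (simp add: emeasure_ball)

lemma Ew_meas[measurable]: "(\<lambda>z. ennreal (Ew d s (dist (c::'a::euclidean_space) z))) \<in> borel_measurable lebesgue"
proof -
  have "(\<lambda>z. ennreal (Ew d s (dist c z))) \<in> borel_measurable lborel"
    unfolding Ew_def by measurable
  then show ?thesis by (rule measurable_completion)
qed

lemma Ew_mono: assumes "0 < r" "r \<le> r'" "0 \<le> s" shows "Ew d s r' \<le> Ew d s r"
proof -
  have "1 / r' ^ (d - 1) \<le> 1 / r ^ (d - 1)" using assms by (intro divide_left_mono power_mono mult_pos_pos) auto
  moreover have "s / r' ^ d \<le> s / r ^ d" using assms by (intro divide_left_mono power_mono mult_pos_pos) auto
  ultimately show ?thesis unfolding Ew_def by (intro min.mono)
qed


lemma choose_N: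
  fixes s :: real assumes s: "0 < s" "s \<le> 1/9"
  obtains N :: nat where "1 \<le> N" "(1/2::real) ^ N \<le> 2 * s" "real N \<le> ln (1/s) / ln 2"
proof -
  define x where "x = ln (1/s) / ln 2"
  define N where "N = nat \<lfloor>x\<rfloor>"
  have "ln 8 \<le> ln (1/s)" using s by (intro ln_mono) (auto simp: field_simps)
  moreover have "ln (8::real) = 3 * ln 2" using ln_realpow[of 2 3] by simp
  ultimately have x3: "x \<ge> 3" unfolding x_def by (simp add: field_simps)
  have Nx: "real N \<le> x" "x < real N + 1" unfolding N_def using x3 by linarith+
  have "1 \<le> N" unfolding N_def using x3 by linarith
  have "ln (1/s) = x * ln 2" unfolding x_def by simp
  then have "1/s = exp (x * ln 2)" using s by (metis exp_ln zero_less_divide_1_iff)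
  also have "\<dots> < exp ((real N + 1) * ln 2)" using Nx by simp
  also have "\<dots> = 2 ^ (N + 1)" using exp_of_nat_mult[of "N+1" "ln (2::real)"] by (simp add: algebra_simps)
  finally have "1/s < 2 ^ (N + 1)" .
  then have "(1/2::real) ^ N \<le> 2 * s" using s by (simp add: field_simps power_one_over)
  with \<open>1 \<le> N\<close> Nx show ?thesis using that unfolding x_def by simp
qed


lemma mm3: fixes l A B X Y :: real
  shows "0 \<le> l \<Longrightarrow> A \<le> X \<Longrightarrow> B \<le> Y \<Longrightarrow> 0 \<le> B \<Longrightarrow> 0 \<le> X \<Longrightarrow> l * A * B \<le> l * X * Y"
  by (metis mult_left_mono mult_mono mult_nonneg_nonneg)

lemma center_bound:
  fixes g :: "'a::euclidean_space \<Rightarrow> real" and c :: 'a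
  assumes d: "DIM('a) \<in> {2,3}" and gm[measurable]: "g \<in> borel_measurable lebesgue"
    and lam: "l > 0" and al: "\<alpha> \<ge> 1"
    and hI: "(\<integral>\<^sup>+z. ennreal (phi_alpha \<alpha> (\<bar>g z\<bar> / l)) \<partial>lebesgue) \<le> 1"
    and s: "0 < s" "s \<le> 1/9"
  defines "\<omega> \<equiv> unit_ball_vol (real DIM('a))"
  defines "K2 \<equiv> 11 + 2 * ln (1 + 1/\<omega>) + 2 * real DIM('a) * ln 2"
  defines "K1 \<equiv> 17 * \<omega> * 2 ^ DIM('a) * K2 / (ln 2)^2"
  shows "(\<integral>\<^sup>+z. ennreal (Ew DIM('a) s (dist c z)) * ennreal \<bar>g z\<bar> \<partial>lebesgue)
     \<le> ennreal (K1 * l * (s * ln (1/s) powr (1 + 1/\<alpha>))) + ennreal s * (\<integral>\<^sup>+z. ennreal \<bar>g z\<bar> \<partial>lebesgue)"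
proof -
  define n where "n = DIM('a)"
  have n1: "n \<ge> 1" unfolding n_def by simp
  have \<omega>: "\<omega> > 0" unfolding \<omega>_def by simp
  have K2: "K2 \<ge> 0" unfolding K2_def using \<omega> by (simp add: add_nonneg_nonneg)
  obtain N :: nat where N1: "1 \<le> N" and N2: "(1/2::real) ^ N \<le> 2 * s" and N3: "real N \<le> ln (1/s) / ln 2"
    using choose_N[OF s] by blast
  define m where "m j = \<omega> * (1 / 2 ^ j) ^ n" for j :: nat
  define F where "F j = 9 + 2 * ln (1 + 1 / m j) powr (1/\<alpha>)" for j :: nat
  define P where "P = l * \<omega> * 2 ^ n * K2 * s * real N powr (1/\<alpha>)"
  define Q where "Q = l * \<omega> * 2 ^ n * K2 * (real N + 1) * (1/2) ^ N"
  define u where "u j = (if j < N then P else Q * (3/4) ^ (j - N))" for j :: nat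
  have m0: "m j > 0" for j unfolding m_def using \<omega> by simp
  have F0: "F j \<ge> 0" for j unfolding F_def by simp
  have bj: "(\<integral>\<^sup>+z. indicator (ball c (1 / 2 ^ j)) z * ennreal \<bar>g z\<bar> \<partial>lebesgue) \<le> ennreal (l * m j * F j)" for j
  proof -
    have "emeasure lebesgue (ball c (1 / 2 ^ j)) = ennreal (m j)"
      unfolding m_def \<omega>_def n_def by (rule emeasure_leb_ball) simp
    then show ?thesis unfolding F_def
      by (intro ball_bound[OF gm lam al hI]) (auto simp: m0)
  qed
  have tj: "Ew n s (1 / 2 ^ Suc j) * (l * m j * F j) \<le> u j" for j
  proof -
    have e0: "0 \<le> Ew n s (1 / 2 ^ Suc j)" using s by (intro Ew_nonneg) auto
    have eq: "Ew n s (1 / 2 ^ Suc j) * (l * m j * F j) = l * (Ew n s (1 / 2 ^ Suc j) * m j) * F j"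
      by (simp add: algebra_simps)
    show ?thesis
    proof (cases "j < N")
      case True
      have "l * (Ew n s (1 / 2 ^ Suc j) * m j) * F j \<le> l * (\<omega> * 2 ^ n * s) * (K2 * real N powr (1/\<alpha>))"
        using Ew_m_bounds(1)[OF \<omega> s(1) n1, of j] F_bound_sharp[OF \<omega> al True, of n] lam e0 m0[of j] F0[of j] \<omega> s(1)
        unfolding m_def F_def K2_def n_def
        by (intro mm3) (auto simp: n_def)
      then show ?thesis using True unfolding eq u_def P_def by (simp add: algebra_simps)
    next
      case False
      have "l * (Ew n s (1 / 2 ^ Suc j) * m j) * F j \<le> l * (\<omega> * 2 ^ n * (1/2) ^ j) * (K2 * (real j + 1))"
        using Ew_m_bounds(2)[OF \<omega> s(1) n1, of j] F_bound_crude[OF \<omega> al, of j n] lam e0 m0[of j] F0[of j] \<omega> s(1)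
        unfolding m_def F_def K2_def n_def
        by (intro mm3) (auto simp: n_def)
      also have "\<dots> = l * \<omega> * 2 ^ n * K2 * ((1/2) ^ j * (real j + 1))" by (simp add: algebra_simps)
      also have "\<dots> \<le> l * \<omega> * 2 ^ n * K2 * ((real N + 1) * (1/2) ^ N * (3/4) ^ (j - N))"
        using tail_geom[of N j] False N1 lam \<omega> K2 by (intro mult_left_mono) auto
      finally show ?thesis using False unfolding eq u_def Q_def by (simp add: algebra_simps)
    qed
  qed
  have u0: "u j \<ge> 0" for j
    unfolding u_def P_def Q_def using lam \<omega> K2 s by auto
  have sumu: "(\<Sum>j. ennreal (u j)) = ennreal (real N * P + 4 * Q)"
  proof -
    have sh: "(\<lambda>t. u (t + N)) = (\<lambda>t. Q * (3/4) ^ t)" unfolding u_def by auto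
    have sq: "summable (\<lambda>t. Q * (3/4::real) ^ t)" by (intro summable_mult summable_geometric) simp
    have su: "summable u" using sq unfolding sh[symmetric] by (simp only: summable_iff_shift)
    have "(\<Sum>j. ennreal (u j)) = ennreal (\<Sum>j. u j)" using u0 su by (rule suminf_ennreal2)
    also have "(\<Sum>j. u j) = (\<Sum>t. u (t + N)) + (\<Sum>j<N. u j)" using su by (rule suminf_split_initial_segment)
    also have "(\<Sum>t. u (t + N)) = 4 * Q" unfolding sh
      by (subst suminf_mult) (auto simp: suminf_geometric summable_geometric)
    also have "(\<Sum>j<N. u j) = real N * P" unfolding u_def by simp
    finally show ?thesis by (simp add: add.commute)
  qed
  define \<beta> where "\<beta> = 1 + 1/\<alpha>"
  have \<beta>: "1 \<le> \<beta>" "\<beta> \<le> 2" unfolding \<beta>_def using al by (auto simp: field_simps)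
  define X where "X = l * \<omega> * 2 ^ n * K2"
  have X: "X \<ge> 0" unfolding X_def using lam \<omega> K2 by simp
  have NR: "real N \<ge> 1" using N1 by simp
  have e1: "real N * P = X * s * real N powr \<beta>"
    unfolding P_def X_def \<beta>_def using NR by (simp add: powr_add algebra_simps)
  have e2: "4 * Q \<le> X * s * (16 * real N)"
  proof -
    have "(real N + 1) * (1/2) ^ N \<le> (2 * real N) * (2 * s)"
      using NR N2 by (intro mult_mono) auto
    then have "X * ((real N + 1) * (1/2) ^ N) \<le> X * ((2 * real N) * (2 * s))"
      using X by (intro mult_left_mono) auto
    then show ?thesis unfolding Q_def X_def by (simp add: algebra_simps)
  qed
  have e3: "real N \<le> real N powr \<beta>"
    using NR \<beta> powr_mono[of 1 \<beta> "real N"] by simp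
  have lns: "ln (1/s) > 0" using s by simp
  have e4: "real N powr \<beta> \<le> ln (1/s) powr \<beta> / (ln 2)^2"
  proof -
    have "real N powr \<beta> \<le> (ln (1/s) / ln 2) powr \<beta>" using N3 \<beta> by (intro powr_mono2) auto
    also have "\<dots> = ln (1/s) powr \<beta> / ln 2 powr \<beta>" using lns by (simp add: powr_divide)
    also have "ln 2 powr 2 \<le> ln (2::real) powr \<beta>" using \<beta> ln_2_less_1 by (intro powr_mono') auto
    then have "ln (1/s) powr \<beta> / ln 2 powr \<beta> \<le> ln (1/s) powr \<beta> / ln 2 powr 2"
      by (intro divide_left_mono) auto
    also have "ln (2::real) powr 2 = (ln 2)^2" by (simp add: powr_numeral)
    finally show ?thesis .
  qed
  have final_real: "real N * P + 4 * Q \<le> K1 * l * (s * ln (1/s) powr (1 + 1/\<alpha>))"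
  proof -
    have "real N * P + 4 * Q \<le> X * s * real N powr \<beta> + X * s * (16 * real N powr \<beta>)"
      using e1 e2 e3 X s by (smt (verit) mult_left_mono mult_nonneg_nonneg)
    also have "\<dots> = 17 * X * s * real N powr \<beta>" by (simp add: algebra_simps)
    also have "\<dots> \<le> 17 * X * s * (ln (1/s) powr \<beta> / (ln 2)^2)"
      using e4 X s by (intro mult_left_mono) auto
    also have "\<dots> = K1 * l * (s * ln (1/s) powr (1 + 1/\<alpha>))"
      unfolding K1_def X_def \<beta>_def n_def by (simp add: algebra_simps)
    finally show ?thesis .
  qed
  have pw: "ennreal (Ew n s (dist c z)) * ennreal \<bar>g z\<bar> \<le>
      indicator (ball c 1) z * ennreal (Ew n s (dist c z)) * ennreal \<bar>g z\<bar> + ennreal s * ennreal \<bar>g z\<bar>" for z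
  proof (cases "z \<in> ball c 1")
    case True then show ?thesis by simp
  next
    case False
    then have dz: "dist c z \<ge> 1" by simp
    have "Ew n s (dist c z) \<le> s / dist c z ^ n" unfolding Ew_def by simp
    also have "\<dots> \<le> s" using dz s by (simp add: divide_le_eq one_le_power mult_le_cancel_left1)
    finally have "ennreal (Ew n s (dist c z)) * ennreal \<bar>g z\<bar> \<le> ennreal s * ennreal \<bar>g z\<bar>"
      by (intro mult_right_mono ennreal_leI) auto
    then show ?thesis using False by simp
  qed
  have "(\<integral>\<^sup>+z. ennreal (Ew n s (dist c z)) * ennreal \<bar>g z\<bar> \<partial>lebesgue) \<le>
      (\<integral>\<^sup>+z. indicator (ball c 1) z * ennreal (Ew n s (dist c z)) * ennreal \<bar>g z\<bar> + ennreal s * ennreal \<bar>g z\<bar> \<partial>lebesgue)"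
    by (intro nn_integral_mono pw)
  also have "\<dots> = (\<integral>\<^sup>+z. indicator (ball c 1) z * ennreal (Ew n s (dist c z)) * ennreal \<bar>g z\<bar> \<partial>lebesgue)
      + ennreal s * (\<integral>\<^sup>+z. ennreal \<bar>g z\<bar> \<partial>lebesgue)"
    by (subst nn_integral_add) (auto simp: nn_integral_cmult)
  also have "(\<integral>\<^sup>+z. indicator (ball c 1) z * ennreal (Ew n s (dist c z)) * ennreal \<bar>g z\<bar> \<partial>lebesgue)
      \<le> (\<Sum>j. ennreal (Ew n s (1 / 2 ^ Suc j)) * (\<integral>\<^sup>+z. indicator (ball c (1 / 2 ^ j)) z * ennreal \<bar>g z\<bar> \<partial>lebesgue))"
    using dyadic[of "\<lambda>z. ennreal \<bar>g z\<bar>" 1 "Ew n s" c] Ew_mono s by simp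
  also have "\<dots> \<le> (\<Sum>j. ennreal (u j))"
  proof (intro suminf_le summableI)
    fix j
    have "ennreal (Ew n s (1 / 2 ^ Suc j)) * (\<integral>\<^sup>+z. indicator (ball c (1 / 2 ^ j)) z * ennreal \<bar>g z\<bar> \<partial>lebesgue)
        \<le> ennreal (Ew n s (1 / 2 ^ Suc j)) * ennreal (l * m j * F j)"
      using bj by (intro mult_left_mono) auto
    also have "\<dots> = ennreal (Ew n s (1 / 2 ^ Suc j) * (l * m j * F j))"
      using s lam m0[of j] F0[of j] by (simp add: ennreal_mult[symmetric] Ew_nonneg)
    also have "\<dots> \<le> ennreal (u j)" using tj by (rule ennreal_leI)
    finally show "ennreal (Ew n s (1 / 2 ^ Suc j)) * (\<integral>\<^sup>+z. indicator (ball c (1 / 2 ^ j)) z * ennreal \<bar>g z\<bar> \<partial>lebesgue)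
        \<le> ennreal (u j)" .
  qed
  also have "\<dots> \<le> ennreal (K1 * l * (s * ln (1/s) powr (1 + 1/\<alpha>)))"
    unfolding sumu using final_real by (rule ennreal_leI)
  finally show ?thesis unfolding n_def by (simp add: add_right_mono)
qed




lemma phi_scale:
  fixes t \<alpha> :: real and n :: nat
  assumes t: "t \<ge> 0" and al: "\<alpha> \<ge> 1" and n: "n \<ge> 1"
  shows "phi_alpha \<alpha> (t / real n) \<le> phi_alpha \<alpha> t / real n"
proof -
  define u where "u = t powr \<alpha>"
  have u: "u \<ge> 0" unfolding u_def by simp
  have nr: "real n \<ge> 1" using n by simp
  have "(t / real n) powr \<alpha> = u / real n powr \<alpha>" unfolding u_def using t nr by (simp add: powr_divide)
  also have "\<dots> \<le> u / real n" using nr al u powr_mono[of 1 \<alpha> "real n"]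
    by (intro divide_left_mono) auto
  finally have a: "exp ((t / real n) powr \<alpha>) \<le> exp (u / real n)" by simp
  define v where "v = exp (u / real n) - 1"
  have v: "v \<ge> 0" unfolding v_def using u nr by simp
  have "1 + real n * v \<le> (1 + v) ^ n" using v by (intro Bernoulli_inequality) simp
  also have "(1 + v) ^ n = exp u" unfolding v_def using nr
    by (simp add: exp_of_nat_mult[symmetric])
  finally have "v \<le> (exp u - 1) / real n" using nr by (simp add: field_simps)
  moreover have "exp ((t / real n) powr \<alpha>) - 1 \<le> v" using a unfolding v_def by simp
  ultimately show ?thesis unfolding phi_alpha_def u_def by linarith
qed

lemma orlicz_nonempty:
  fixes g :: "'a::euclidean_space \<Rightarrow> real"
  assumes "g \<in> orlicz_space (phi_alpha \<alpha>)" and al: "\<alpha> \<ge> 1"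
  shows "\<exists>c>0. (\<integral>\<^sup>+ x. ennreal (phi_alpha \<alpha> (\<bar>g x\<bar> / c)) \<partial>lebesgue) < 1"
proof -
  from assms obtain c0 where c0: "c0 > 0" and fin: "(\<integral>\<^sup>+ x. ennreal (phi_alpha \<alpha> (\<bar>g x\<bar> / c0)) \<partial>lebesgue) < \<infinity>"
    and gm[measurable]: "g \<in> borel_measurable lebesgue"
    unfolding orlicz_space_def by auto
  define I where "I = (\<integral>\<^sup>+ x. ennreal (phi_alpha \<alpha> (\<bar>g x\<bar> / c0)) \<partial>lebesgue)"
  obtain r where r: "r \<ge> 0" "I = ennreal r" using fin unfolding I_def by (cases "I") (auto simp: I_def)
  obtain n :: nat where n: "r < real n" using reals_Archimedean2 by blast
  have n1: "n \<ge> 1" using n r by (cases n) auto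
  have "(\<integral>\<^sup>+ x. ennreal (phi_alpha \<alpha> (\<bar>g x\<bar> / (real n * c0))) \<partial>lebesgue)
      \<le> (\<integral>\<^sup>+ x. ennreal (1 / real n) * ennreal (phi_alpha \<alpha> (\<bar>g x\<bar> / c0)) \<partial>lebesgue)"
  proof (intro nn_integral_mono)
    fix x
    have "phi_alpha \<alpha> (\<bar>g x\<bar> / (real n * c0)) = phi_alpha \<alpha> ((\<bar>g x\<bar> / c0) / real n)"
      by (simp add: field_simps)
    also have "\<dots> \<le> phi_alpha \<alpha> (\<bar>g x\<bar> / c0) / real n" using phi_scale[OF _ al n1, of "\<bar>g x\<bar> / c0"] c0 by simp
    finally show "ennreal (phi_alpha \<alpha> (\<bar>g x\<bar> / (real n * c0))) \<le> ennreal (1 / real n) * ennreal (phi_alpha \<alpha> (\<bar>g x\<bar> / c0))"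
      using n1 by (simp add: ennreal_mult[symmetric] phi_alpha_def ennreal_leI)
  qed
  also have "\<dots> = ennreal (1 / real n) * ennreal r"
    using r unfolding I_def by (subst nn_integral_cmult) auto
  also have "\<dots> = ennreal (r / real n)" using r by (simp add: ennreal_mult[symmetric])
  also have "\<dots> < 1" using n n1 r by (simp add: divide_less_eq)
  finally show ?thesis using c0 n1 by (intro exI[of _ "real n * c0"]) auto
qed




lemma enn_combine2: fixes a b c k :: real
  assumes "0 \<le> a" "0 \<le> b" "0 \<le> c" "0 \<le> k"
  shows "ennreal k * (ennreal a + ennreal b * ennreal c) + ennreal k * (ennreal a + ennreal b * ennreal c) = ennreal (2 * k * (a + b * c))"
proof -
  define t where "t = a + b * c"
  have t0: "t \<ge> 0" unfolding t_def using assms by simp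
  have "ennreal a + ennreal b * ennreal c = ennreal t" unfolding t_def using assms by (simp add: ennreal_mult ennreal_plus)
  moreover have "ennreal k * ennreal t = ennreal (k * t)" using assms t0 by (simp add: ennreal_mult)
  moreover have "ennreal (k * t) + ennreal (k * t) = ennreal (2 * k * t)"
  proof -
    have e: "2 * k * t = k * t + k * t" by simp
    have "ennreal (k * t + k * t) = ennreal (k * t) + ennreal (k * t)"
      using assms t0 by (intro ennreal_plus) auto
    then show ?thesis unfolding e by simp
  qed
  ultimately show ?thesis unfolding t_def by (simp only: mult.assoc)
qed

lemma enn_combine3: fixes a b c k :: real
  assumes "0 \<le> a" "0 \<le> b" "0 \<le> c" "0 \<le> k"
  shows "ennreal k * (ennreal a + ennreal b * ennreal c) + ennreal k * (ennreal a + ennreal b * ennreal c)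
    + ennreal 2 * ennreal c = ennreal (2 * k * (a + b * c) + 2 * c)"
proof -
  have "ennreal 2 * ennreal c = ennreal (2 * c)" using assms by (simp add: ennreal_mult)
  moreover have "ennreal (2 * k * (a + b * c)) + ennreal (2 * c) = ennreal (2 * k * (a + b * c) + 2 * c)"
    using assms by (intro ennreal_plus[symmetric]) auto
  ultimately show ?thesis using enn_combine2[OF assms] by simp
qed


lemma main_l:
  fixes g :: "'a::euclidean_space \<Rightarrow> real" and x y :: 'a
  assumes d: "DIM('a) \<in> {2,3}" and gm[measurable]: "g \<in> borel_measurable lebesgue"
    and gi: "integrable lebesgue g"
    and lam: "l > 0" and al: "\<alpha> \<ge> 1"
    and hI: "(\<integral>\<^sup>+z. ennreal (phi_alpha \<alpha> (\<bar>g z\<bar> / l)) \<partial>lebesgue) \<le> 1"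
    and gam: "\<gamma>0 \<in> {1, -1}"
  defines "\<omega> \<equiv> unit_ball_vol (real DIM('a))"
  defines "K2 \<equiv> 11 + 2 * ln (1 + 1/\<omega>) + 2 * real DIM('a) * ln 2"
  defines "K1 \<equiv> 17 * \<omega> * 2 ^ DIM('a) * K2 / (ln 2)^2"
  shows "(\<integral>\<^sup>+ z. ennreal (norm (kernK \<gamma>0 (x - z) - kernK \<gamma>0 (y - z)) * \<bar>g z\<bar>) \<partial>lebesgue)
     \<le> ennreal (36 * (K1 + 1) * (l + (\<integral>z. \<bar>g z\<bar> \<partial>lebesgue)) * psi_alpha \<alpha> (dist x y))"
proof -
  define n where "n = DIM('a)"
  define L where "L = (\<integral>z. \<bar>g z\<bar> \<partial>lebesgue)"
  define \<beta> where "\<beta> = 1 + 1/\<alpha>"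
  define \<delta> where "\<delta> = dist x y"
  have L0: "L \<ge> 0" unfolding L_def by simp
  have LL: "(\<integral>\<^sup>+z. ennreal \<bar>g z\<bar> \<partial>lebesgue) = ennreal L"
    unfolding L_def using gi by (intro nn_integral_eq_integral) auto
  have \<omega>: "\<omega> > 0" unfolding \<omega>_def by simp
  have K1: "K1 \<ge> 0" unfolding K1_def K2_def using \<omega> by (simp add: add_nonneg_nonneg)
  have g1: "\<bar>\<gamma>0\<bar> = 1" using gam by auto
  have CB: "\<And>c s. 0 < s \<Longrightarrow> s \<le> 1/9 \<Longrightarrow>
     (\<integral>\<^sup>+z. ennreal (Ew n s (dist c z)) * ennreal \<bar>g z\<bar> \<partial>lebesgue)
     \<le> ennreal (K1 * l * (s * ln (1/s) powr \<beta>)) + ennreal s * ennreal L"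
    using center_bound[OF d gm lam al hI] unfolding K1_def K2_def \<omega>_def n_def \<beta>_def LL by blast
  have nd: "norm (x - z) = dist x z" "norm (y - z) = dist y z" "norm ((x - z) - (y - z)) = \<delta>" for z
    unfolding \<delta>_def by (auto simp: dist_norm)
  consider "\<delta> = 0" | "0 < \<delta>" "\<delta> \<le> 1/9" | "\<delta> > 1/9" unfolding \<delta>_def by force
  then show ?thesis
  proof cases
    case 1
    then have "x = y" unfolding \<delta>_def by simp
    then show ?thesis by simp
  next
    case 2
    have psi: "psi_alpha \<alpha> \<delta> = \<delta> * ln (1/\<delta>) powr \<beta>"
      using 2 unfolding psi_alpha_def \<beta>_def by (simp add: ln_div abs_if)
    have ln1: "ln (1/\<delta>) \<ge> 1"
    proof -
      have "exp 1 \<le> (3::real)" using exp_le by simp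
      also have "3 \<le> 1/\<delta>" using 2 by (simp add: field_simps)
      finally show ?thesis using 2 by (simp add: ln_ge_iff)
    qed
    have xy: "x \<noteq> y" using 2 unfolding \<delta>_def by auto
    have lnb: "ln (1/\<delta>) powr \<beta> \<ge> 1" using ln1 \<beta>_def al by (simp add: ge_one_powr_ge_zero)
    have pw: "ennreal (norm (kernK \<gamma>0 (x - z) - kernK \<gamma>0 (y - z)) * \<bar>g z\<bar>)
      \<le> ennreal 8 * (ennreal (Ew n \<delta> (dist x z)) * ennreal \<bar>g z\<bar>) + ennreal 8 * (ennreal (Ew n \<delta> (dist y z)) * ennreal \<bar>g z\<bar>)" for z
    proof -
      have k: "norm (kernK \<gamma>0 (x - z) - kernK \<gamma>0 (y - z)) \<le> 8 * (Ew n \<delta> (dist x z) + Ew n \<delta> (dist y z))"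
        using kern_small[OF d g1, of "x - z" "y - z"] 2 nd[of z] xy unfolding n_def by simp
      have e: "0 \<le> Ew n \<delta> (dist x z)" "0 \<le> Ew n \<delta> (dist y z)" using 2 by (auto intro: Ew_nonneg)
      have "norm (kernK \<gamma>0 (x - z) - kernK \<gamma>0 (y - z)) * \<bar>g z\<bar> \<le> 8 * (Ew n \<delta> (dist x z) + Ew n \<delta> (dist y z)) * \<bar>g z\<bar>"
        using k by (intro mult_right_mono) auto
      also have "\<dots> = 8 * (Ew n \<delta> (dist x z) * \<bar>g z\<bar>) + 8 * (Ew n \<delta> (dist y z) * \<bar>g z\<bar>)" by (simp add: algebra_simps)
      finally have "ennreal (norm (kernK \<gamma>0 (x - z) - kernK \<gamma>0 (y - z)) * \<bar>g z\<bar>) \<le>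
          ennreal (8 * (Ew n \<delta> (dist x z) * \<bar>g z\<bar>) + 8 * (Ew n \<delta> (dist y z) * \<bar>g z\<bar>))"
        by (rule ennreal_leI)
      also have "\<dots> = ennreal 8 * (ennreal (Ew n \<delta> (dist x z)) * ennreal \<bar>g z\<bar>) + ennreal 8 * (ennreal (Ew n \<delta> (dist y z)) * ennreal \<bar>g z\<bar>)"
        using e by (simp add: ennreal_plus ennreal_mult)
      finally show ?thesis .
    qed
    have "(\<integral>\<^sup>+ z. ennreal (norm (kernK \<gamma>0 (x - z) - kernK \<gamma>0 (y - z)) * \<bar>g z\<bar>) \<partial>lebesgue)
      \<le> (\<integral>\<^sup>+ z. ennreal 8 * (ennreal (Ew n \<delta> (dist x z)) * ennreal \<bar>g z\<bar>) + ennreal 8 * (ennreal (Ew n \<delta> (dist y z)) * ennreal \<bar>g z\<bar>) \<partial>lebesgue)"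
      by (intro nn_integral_mono pw)
    also have "\<dots> = ennreal 8 * (\<integral>\<^sup>+ z. ennreal (Ew n \<delta> (dist x z)) * ennreal \<bar>g z\<bar> \<partial>lebesgue)
       + ennreal 8 * (\<integral>\<^sup>+ z. ennreal (Ew n \<delta> (dist y z)) * ennreal \<bar>g z\<bar> \<partial>lebesgue)"
      by (subst nn_integral_add) (auto simp: nn_integral_cmult)
    also have "\<dots> \<le> ennreal 8 * (ennreal (K1 * l * (\<delta> * ln (1/\<delta>) powr \<beta>)) + ennreal \<delta> * ennreal L)
       + ennreal 8 * (ennreal (K1 * l * (\<delta> * ln (1/\<delta>) powr \<beta>)) + ennreal \<delta> * ennreal L)"
      using CB[of \<delta> x] CB[of \<delta> y] 2 by (intro add_mono mult_left_mono) auto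
    also have "\<dots> = ennreal (2 * 8 * (K1 * l * (\<delta> * ln (1/\<delta>) powr \<beta>) + \<delta> * L))"
      using 2 K1 lam L0 by (intro enn_combine2) auto
    also have "\<dots> \<le> ennreal (36 * (K1 + 1) * (l + L) * psi_alpha \<alpha> \<delta>)"
    proof (rule ennreal_leI)
      define P where "P = ln (1/\<delta>) powr \<beta>"
      have P: "P \<ge> 1" unfolding P_def using lnb .
      have "16 * (K1 * l * (\<delta> * P) + \<delta> * L) \<le> 16 * (K1 * l * (\<delta> * P) + \<delta> * P * L)"
        using P 2 L0 by (intro mult_left_mono add_left_mono mult_right_mono) auto
      also have "\<dots> = 16 * (\<delta> * P) * (K1 * l + L)" by (simp add: algebra_simps)
      also have "\<dots> \<le> 36 * (\<delta> * P) * ((K1 + 1) * (l + L))"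
      proof (intro mult_mono)
        show "K1 * l + L \<le> (K1 + 1) * (l + L)" using K1 lam L0 by (simp add: algebra_simps)
      qed (use P 2 K1 lam L0 in auto)
      finally show "2 * 8 * (K1 * l * (\<delta> * ln (1/\<delta>) powr \<beta>) + \<delta> * L) \<le> 36 * (K1 + 1) * (l + L) * psi_alpha \<alpha> \<delta>"
        unfolding psi P_def by (simp add: algebra_simps)
    qed
    finally show ?thesis unfolding L_def \<delta>_def .
  next
    case 3
    define \<psi>0 where "\<psi>0 = (1/9) * ln 9 powr \<beta>"
    have psi: "psi_alpha \<alpha> \<delta> = \<psi>0" using 3 unfolding psi_alpha_def \<psi>0_def \<beta>_def by simp
    have ln9: "ln (9::real) \<ge> 1"
    proof -
      have "exp 1 \<le> (3::real)" using exp_le by simp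
      then show ?thesis by (simp add: ln_ge_iff)
    qed
    have lnb: "ln 9 powr \<beta> \<ge> 1" using ln9 \<beta>_def al by (simp add: ge_one_powr_ge_zero)
    have psi0: "\<psi>0 \<ge> 1/9" unfolding \<psi>0_def using lnb by simp
    have d2: "2 \<le> n" using d unfolding n_def by auto
    have pw: "ennreal (norm (kernK \<gamma>0 (x - z) - kernK \<gamma>0 (y - z)) * \<bar>g z\<bar>)
      \<le> ennreal 9 * (ennreal (Ew n (1/9) (dist x z)) * ennreal \<bar>g z\<bar>) + ennreal 9 * (ennreal (Ew n (1/9) (dist y z)) * ennreal \<bar>g z\<bar>)
         + ennreal 2 * ennreal \<bar>g z\<bar>" for z
    proof -
      have k: "norm (kernK \<gamma>0 (x - z) - kernK \<gamma>0 (y - z)) \<le> 9 * Ew n (1/9) (dist x z) + 1 + (9 * Ew n (1/9) (dist y z) + 1)"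
        using kern_large[OF d g1, of "x - z" "y - z"] nd[of z] unfolding n_def by simp
      have e: "0 \<le> Ew n (1/9) (dist x z)" "0 \<le> Ew n (1/9) (dist y z)" by (auto intro: Ew_nonneg)
      have "norm (kernK \<gamma>0 (x - z) - kernK \<gamma>0 (y - z)) * \<bar>g z\<bar> \<le> (9 * Ew n (1/9) (dist x z) + 1 + (9 * Ew n (1/9) (dist y z) + 1)) * \<bar>g z\<bar>"
        using k by (intro mult_right_mono) auto
      also have "\<dots> = 9 * (Ew n (1/9) (dist x z) * \<bar>g z\<bar>) + 9 * (Ew n (1/9) (dist y z) * \<bar>g z\<bar>) + 2 * \<bar>g z\<bar>" by (simp add: algebra_simps)
      finally have "ennreal (norm (kernK \<gamma>0 (x - z) - kernK \<gamma>0 (y - z)) * \<bar>g z\<bar>) \<le>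
          ennreal (9 * (Ew n (1/9) (dist x z) * \<bar>g z\<bar>) + 9 * (Ew n (1/9) (dist y z) * \<bar>g z\<bar>) + 2 * \<bar>g z\<bar>)"
        by (rule ennreal_leI)
      also have "\<dots> = ennreal 9 * (ennreal (Ew n (1/9) (dist x z)) * ennreal \<bar>g z\<bar>) + ennreal 9 * (ennreal (Ew n (1/9) (dist y z)) * ennreal \<bar>g z\<bar>)
         + ennreal 2 * ennreal \<bar>g z\<bar>"
        using e by (simp add: ennreal_plus ennreal_mult)
      finally show ?thesis .
    qed
    have "(\<integral>\<^sup>+ z. ennreal (norm (kernK \<gamma>0 (x - z) - kernK \<gamma>0 (y - z)) * \<bar>g z\<bar>) \<partial>lebesgue)
      \<le> (\<integral>\<^sup>+ z. ennreal 9 * (ennreal (Ew n (1/9) (dist x z)) * ennreal \<bar>g z\<bar>) + ennreal 9 * (ennreal (Ew n (1/9) (dist y z)) * ennreal \<bar>g z\<bar>)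
         + ennreal 2 * ennreal \<bar>g z\<bar> \<partial>lebesgue)"
      by (intro nn_integral_mono pw)
    also have "\<dots> = ennreal 9 * (\<integral>\<^sup>+ z. ennreal (Ew n (1/9) (dist x z)) * ennreal \<bar>g z\<bar> \<partial>lebesgue)
       + ennreal 9 * (\<integral>\<^sup>+ z. ennreal (Ew n (1/9) (dist y z)) * ennreal \<bar>g z\<bar> \<partial>lebesgue)
       + ennreal 2 * (\<integral>\<^sup>+ z. ennreal \<bar>g z\<bar> \<partial>lebesgue)"
      by (subst nn_integral_add, measurable)+ (auto simp: nn_integral_cmult)
    also have "\<dots> \<le> ennreal 9 * (ennreal (K1 * l * ((1/9) * ln (1/(1/9)) powr \<beta>)) + ennreal (1/9) * ennreal L)
       + ennreal 9 * (ennreal (K1 * l * ((1/9) * ln (1/(1/9)) powr \<beta>)) + ennreal (1/9) * ennreal L)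
       + ennreal 2 * ennreal L"
      using CB[of "1/9" x] CB[of "1/9" y] unfolding LL by (intro add_mono mult_left_mono) auto
    also have "\<dots> = ennreal (2 * 9 * (K1 * l * ((1/9) * ln (1/(1/9)) powr \<beta>) + (1/9) * L) + 2 * L)"
      using K1 lam L0 lnb by (intro enn_combine3) auto
    also have "2 * 9 * (K1 * l * ((1/9) * ln (1/(1/9)) powr \<beta>) + (1/9) * L) + 2 * L = 18 * K1 * l * \<psi>0 + 4 * L"
      unfolding \<psi>0_def by (simp add: algebra_simps)
    also have "\<dots> \<le> ennreal (36 * (K1 + 1) * (l + L) * psi_alpha \<alpha> \<delta>)"
    proof (rule ennreal_leI)
      have a: "18 * K1 * l * \<psi>0 \<le> 36 * (K1 + 1) * l * \<psi>0"
        using K1 lam psi0 by (intro mult_right_mono) auto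
      have b: "4 * L \<le> 36 * (K1 + 1) * L * \<psi>0"
      proof -
        have "4 * L \<le> 36 * L * \<psi>0" using mult_left_mono[of 4 "36 * \<psi>0" L] psi0 L0 by (simp add: algebra_simps)
        also have "\<dots> \<le> 36 * (K1 + 1) * L * \<psi>0" using K1 L0 psi0 by (intro mult_right_mono) auto
        finally show ?thesis .
      qed
      show "18 * K1 * l * \<psi>0 + 4 * L \<le> 36 * (K1 + 1) * (l + L) * psi_alpha \<alpha> \<delta>"
        using a b unfolding psi by (simp add: algebra_simps)
    qed
    finally show ?thesis unfolding L_def \<delta>_def .
  qed
qed


theorem lemma2p1:
  fixes \<alpha> :: real
  assumes "DIM('a::euclidean_space) \<in> {2, 3}"
    and "\<alpha> \<ge> 1"
  shows "\<exists>C>0. \<forall>(\<gamma>0::real) (g::'a \<Rightarrow> real) (x::'a) (y::'a).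
           \<gamma>0 \<in> {1, -1} \<longrightarrow> g \<in> orlicz_space (phi_alpha \<alpha>) \<longrightarrow> integrable lebesgue g \<longrightarrow>
           (\<integral>\<^sup>+ z. ennreal (norm (kernK \<gamma>0 (x - z) - kernK \<gamma>0 (y - z)) * \<bar>g z\<bar>) \<partial>lebesgue)
             \<le> ennreal (C * (lux_norm (phi_alpha \<alpha>) g + (\<integral>z. \<bar>g z\<bar> \<partial>lebesgue))
                          * psi_alpha \<alpha> (dist x y))"
proof -
  define \<omega> where "\<omega> = unit_ball_vol (real DIM('a))"
  define K2 where "K2 = 11 + 2 * ln (1 + 1/\<omega>) + 2 * real DIM('a) * ln 2"
  define K1 where "K1 = 17 * \<omega> * 2 ^ DIM('a) * K2 / (ln 2)^2"
  define C where "C = 36 * (K1 + 1)"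
  have \<omega>: "\<omega> > 0" unfolding \<omega>_def by simp
  have K1: "K1 \<ge> 0" unfolding K1_def K2_def using \<omega> by (simp add: add_nonneg_nonneg)
  have C: "C > 0" unfolding C_def using K1 by simp
  show ?thesis
  proof (intro exI[of _ C] conjI allI impI C)
    fix \<gamma>0 :: real and g :: "'a \<Rightarrow> real" and x y :: 'a
    assume gam: "\<gamma>0 \<in> {1, -1}" and orl: "g \<in> orlicz_space (phi_alpha \<alpha>)" and gi: "integrable lebesgue g"
    have gm: "g \<in> borel_measurable lebesgue" using orl unfolding orlicz_space_def by auto
    define S where "S = {c. c > 0 \<and> (\<integral>\<^sup>+ x. ennreal (phi_alpha \<alpha> (\<bar>g x\<bar> / c)) \<partial>lebesgue) < 1}"
    have lux: "lux_norm (phi_alpha \<alpha>) g = Inf S" unfolding lux_norm_def S_def by simp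
    have Sne: "S \<noteq> {}" using orlicz_nonempty[OF orl assms(2)] unfolding S_def by auto
    define L where "L = (\<integral>z. \<bar>g z\<bar> \<partial>lebesgue)"
    have L0: "L \<ge> 0" unfolding L_def by simp
    define \<psi> where "\<psi> = psi_alpha \<alpha> (dist x y)"
    have \<psi>0: "\<psi> \<ge> 0" unfolding \<psi>_def psi_alpha_def by simp
    define LHS where "LHS = (\<integral>\<^sup>+ z. ennreal (norm (kernK \<gamma>0 (x - z) - kernK \<gamma>0 (y - z)) * \<bar>g z\<bar>) \<partial>lebesgue)"
    have H: "LHS \<le> ennreal (C * (c + L) * \<psi>)" if "c \<in> S" for c
      using main_l[OF assms(1) gm gi _ assms(2) _ gam, of c x y] that
      unfolding S_def LHS_def C_def L_def \<psi>_def K1_def K2_def \<omega>_def by auto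
    show "LHS \<le> ennreal (C * (lux_norm (phi_alpha \<alpha>) g + L) * \<psi>)"
    proof (cases "\<psi> = 0")
      case True
      obtain c where "c \<in> S" using Sne by auto
      then show ?thesis using H[of c] True by simp
    next
      case False
      then have \<psi>p: "\<psi> > 0" using \<psi>0 by simp
      obtain c0 where c0: "c0 \<in> S" using Sne by auto
      have "LHS < top" using H[OF c0] by (simp add: le_less_trans)
      then obtain t where t: "t \<ge> 0" "LHS = ennreal t" using less_top_ennreal by auto
      have tc: "t / (C * \<psi>) - L \<le> c" if "c \<in> S" for c
      proof -
        have cp: "c > 0" using that unfolding S_def by auto
        have "ennreal t \<le> ennreal (C * (c + L) * \<psi>)" using H[OF that] t by simp
        then have "t \<le> C * (c + L) * \<psi>" using C cp L0 \<psi>0 by (subst (asm) ennreal_le_iff) auto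
        then show ?thesis using C \<psi>p by (simp add: field_simps)
      qed
      have "t / (C * \<psi>) - L \<le> Inf S" using Sne tc by (intro cInf_greatest) auto
      then have "t \<le> C * (Inf S + L) * \<psi>" using C \<psi>p by (simp add: field_simps)
      then show ?thesis unfolding lux t(2) by (rule ennreal_leI)
    qed
  qed
qed


end
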